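(* (i) For every $L>0$, the map $\Delta\mapsto \mathrm P_\Delta(|\hat\tau_{\rm PT}-\tau|\le L(1+\gamma)^{-1/2}\sigma_0)$ is symmetric about $\Delta=0$. (ii) For every $t\in\mathbb R$ and $L\ge0$, with $c=c_{\alpha/2}$, \begin{align*} G_{\rm PT}(t,L):={}&\mathrm P_{\Delta/\sigma_0=t}\big(|\hat\tau_{\rm PT}-\tau|\le L(1+\gamma)^{-1/2}\sigma_0\big)\\ ={}&\Big[\Phi\big(c-\sqrt{\tfrac{\gamma}{1+\gamma}}t\big)-\Phi\big(-c-\sqrt{\tfrac{\gamma}{1+\gamma}}t\big)\Big]\Big[\Phi\big(L-\tfrac{\gamma}{\sqrt{1+\gamma}}t\big)-\Phi\big(-L-\tfrac{\gamma}{\sqrt{1+\gamma}}t\big)\Big]\\ &+\int_{-\infty}^{-c-\sqrt{\frac{\gamma}{1+\gamma}}t}\big[\Phi(L+\sqrt\gamma u)-\Phi(-L+\sqrt\gamma u)\big]\phi(u)\,du\\ &+\int_{c-\sqrt{\frac{\gamma}{1+\gamma}}t}^{\infty}\big[\Phi(L+\sqrt\gamma u)-\Phi(-L+\sqrt\gamma u)\big]\phi(u)\,du. \end{align*} (iii) Fix $b\ge0$ and $\zeta\in(0,1)$, and let \[ \hat L_{\rm PT}=\inf\Big\{L\ge0:\inf_{\Delta:|\Delta/\sigma_0|\le b}\mathrm P_\Delta\big(|\hat\tau_{\rm PT}-\tau|\le L(1+\gamma)^{-1/2}\sigma_0\big)\ge 1-\zeta\Big\}. \] Then $\hat L_{\rm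 PT}$ is the solution in $L$ of $\min_{0\le t\le b}G_{\rm PT}(t,L)=1-\zeta$. Hence $[\hat\tau_{\rm PT}\pm \hat L_{\rm PT}(1+\gamma)^{-1/2}\sigma_0]$ is the shortest symmetric interval centered at $\hat\tau_{\rm PT}$, with data-independent half-length, having coverage at least $1-\zeta$ uniformly over $|\Delta/\sigma_0|\le b$.
   Context: Let $\tau\in\mathbb R$ be an unknown parameter and $\Delta\in\mathbb R$ an unknown bias. Let $\sigma_0,\sigma_1>0$ be known. We observe independent random variables $\hat\tau_0\sim N(\tau,\sigma_0^2)$ and $\hat\tau_1\sim N(\tau+\Delta,\sigma_1^2)$. Define $\gamma=\sigma_0^2/\sigma_1^2$ and $\sigma=\sqrt{\sigma_0^2+\sigma_1^2}$. Write $\Phi$ and $\phi$ for the standard normal CDF and density. For $a\in(0,1)$, let $c_a=\Phi^{-1}(1-a)$. Fix a tuning level $\alpha\in(0,1)$. The pretest estimator is \[ \hat\tau_{\rm PT}=\hat\tau_0+\frac{\gamma}{1+\gamma}(\hat\tau_1-\hat\tau_0)\,\mathbf 1\big(|\hat\tau_1-\hat\tau_0|\le \sigma c_{\alpha/2}\big). \] $\mathrm P_\Delta$ denotes probability under bias $\Delta$, and $\mathrm P_{\Delta/\sigma_0=t}$ means probability under $\Delta=t\sigma_0$. These probabilities do not depend on $\tau$. *)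

theory Defs
  imports "HOL-Probability.Probability"
begin

definition phi :: "real \<Rightarrow> real" where
  "phi u = std_normal_density u"

definition Phi :: "real \<Rightarrow> real" where
  "Phi x = (LBINT u:{..x}. std_normal_density u)"

definition crit :: "real \<Rightarrow> real" where
  "crit a = (THE c. Phi c = 1 - a)"

definition gam :: "real \<Rightarrow> real \<Rightarrow> real" where
  "gam s0 s1 = s0\<^sup>2 / s1\<^sup>2"

definition sig :: "real \<Rightarrow> real \<Rightarrow> real" where
  "sig s0 s1 = sqrt (s0\<^sup>2 + s1\<^sup>2)"

definition tau_PT :: "real \<Rightarrow> real \<Rightarrow> real \<Rightarrow> real \<Rightarrow> real \<Rightarrow> real" where
  "tau_PT s0 s1 alpha x0 x1 =
     x0 + gam s0 s1 / (1 + gam s0 s1) * (x1 - x0)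
        * (if \<bar>x1 - x0\<bar> \<le> sig s0 s1 * crit (alpha / 2) then 1 else 0)"

text \<open>Joint law of independent tau0_hat ~ N(tau, s0^2), tau1_hat ~ N(tau + Delta, s1^2).\<close>
definition obs_model :: "real \<Rightarrow> real \<Rightarrow> real \<Rightarrow> real \<Rightarrow> (real \<times> real) measure" where
  "obs_model s0 s1 tau Delta =
     density lborel (normal_density tau s0) \<Otimes>\<^sub>M density lborel (normal_density (tau + Delta) s1)"

definition cover_prob :: "real \<Rightarrow> real \<Rightarrow> real \<Rightarrow> real \<Rightarrow> real \<Rightarrow> real \<Rightarrow> real" where
  "cover_prob s0 s1 alpha tau Delta L =
     measure (obs_model s0 s1 tau Delta)
       {p. \<bar>tau_PT s0 s1 alpha (fst p) (snd p) - tau\<bar> \<le> L / sqrt (1 + gam s0 s1) * s0}"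

definition G_PT :: "real \<Rightarrow> real \<Rightarrow> real \<Rightarrow> real \<Rightarrow> real \<Rightarrow> real \<Rightarrow> real" where
  "G_PT s0 s1 alpha tau t L = cover_prob s0 s1 alpha tau (t * s0) L"

definition L_hat :: "real \<Rightarrow> real \<Rightarrow> real \<Rightarrow> real \<Rightarrow> real \<Rightarrow> real \<Rightarrow> real" where
  "L_hat s0 s1 alpha tau b zeta =
     Inf {L. L \<ge> 0 \<and>
            (INF Delta\<in>{Delta. \<bar>Delta / s0\<bar> \<le> b}. cover_prob s0 s1 alpha tau Delta L) \<ge> 1 - zeta}"

end

theory Submission
  imports Defs
begin


definition NN :: "real measure" where "NN = density lborel std_normal_density"

lemma NN_prob: "prob_space NN" unfolding NN_def by (rule prob_space_normal_density) simp
lemma sets_NN[simp, measurable_cong]: "sets NN = sets borel" unfolding NN_def by simp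
lemma space_NN[simp]: "space NN = UNIV" unfolding NN_def by simp
lemma NN_real_dist: "real_distribution NN"
  unfolding real_distribution_def real_distribution_axioms_def using NN_prob by simp

lemma emeasure_NN: "A \<in> sets borel \<Longrightarrow> emeasure NN A = (\<integral>\<^sup>+x. ennreal (std_normal_density x) * indicator A x \<partial>lborel)"
  unfolding NN_def by (subst emeasure_density) auto

lemma Phi_NN: "Phi x = measure NN {..x}"
proof -
  have "Phi x = integral\<^sup>L NN (indicator {..x})"
    unfolding Phi_def set_lebesgue_integral_def NN_def
    by (subst integral_density) (auto simp: mult.commute)
  then show ?thesis by simp
qed

lemma NN_singleton: "measure NN {a} = 0"
proof -
  have "emeasure NN {a} = (\<integral>\<^sup>+x. ennreal (std_normal_density a) * indicator {a} x \<partial>lborel)"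
    by (subst emeasure_NN) (auto intro!: nn_integral_cong simp: indicator_def)
  also have "\<dots> = 0" by (subst nn_integral_cmult_indicator) auto
  finally show ?thesis by (simp add: measure_def)
qed

lemma NN_Iio: "measure NN {..<a} = Phi a"
proof -
  interpret prob_space NN by (rule NN_prob)
  have "{..a} = {..<a} \<union> {a}" by auto
  then have "measure NN {..a} = measure NN {..<a} + measure NN {a}"
    by (metis finite_measure_Union sets_NN atMost_borel lessThan_borel borel_singleton sets.empty_sets
        lessThan_iff disjoint_iff singletonD order.irrefl)
  then show ?thesis using NN_singleton Phi_NN by simp
qed

lemma NN_Icc: "a \<le> b \<Longrightarrow> measure NN {a..b} = Phi b - Phi a"
proof -
  interpret prob_space NN by (rule NN_prob)
  assume ab: "a \<le> b"
  have "{..b} = {..<a} \<union> {a..b}" using ab by auto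
  moreover have "{..<a} \<inter> {a..b} = {}" by auto
  ultimately have "measure NN {..b} = measure NN {..<a} + measure NN {a..b}"
    by (metis finite_measure_Union sets_NN atLeastAtMost_borel lessThan_borel)
  then show ?thesis using NN_Iio Phi_NN by simp
qed

lemma NN_Ici: "measure NN {a..} = 1 - Phi a"
proof -
  interpret prob_space NN by (rule NN_prob)
  have "UNIV = {..<a} \<union> {a..}" by auto
  moreover have "{..<a} \<inter> {a..} = {}" by auto
  ultimately have "measure NN UNIV = measure NN {..<a} + measure NN {a..}"
    by (metis finite_measure_Union sets_NN atLeast_borel lessThan_borel)
  then show ?thesis using NN_Iio prob_space by simp
qed

lemma Phi_nonneg: "0 \<le> Phi x" by (simp add: Phi_NN)
lemma Phi_le1: "Phi x \<le> 1"
proof -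
  interpret prob_space NN by (rule NN_prob)
  show ?thesis by (simp add: Phi_NN)
qed

lemma Phi_mono: "x \<le> y \<Longrightarrow> Phi x \<le> Phi y"
proof -
  interpret prob_space NN by (rule NN_prob)
  assume "x \<le> y" then show ?thesis using NN_Icc[of x y] measure_nonneg[of NN "{x..y}"] by linarith
qed

lemma std_le1: "std_normal_density z \<le> 1"
proof -
  have "exp (- z\<^sup>2 / 2) \<le> 1" by simp
  moreover have "1 / sqrt (2 * pi) \<le> 1" using pi_gt3 by (simp add: divide_le_eq_1 real_le_rsqrt)
  ultimately show ?thesis unfolding std_normal_density_def
    by (intro mult_le_one) auto
qed

lemma std_anti: "\<bar>u\<bar> \<le> M \<Longrightarrow> std_normal_density M \<le> std_normal_density u"
proof -
  assume "\<bar>u\<bar> \<le> M"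
  then have "u\<^sup>2 \<le> M\<^sup>2" by (metis abs_le_square_iff abs_of_nonneg abs_ge_zero order_trans)
  then show ?thesis unfolding std_normal_density_def by (auto intro!: divide_right_mono)
qed

lemma NN_Icc_le: "x \<le> y \<Longrightarrow> measure NN {x..y} \<le> y - x"
proof -
  assume xy: "x \<le> y"
  have "emeasure NN {x..y} = (\<integral>\<^sup>+u. ennreal (std_normal_density u) * indicator {x..y} u \<partial>lborel)"
    by (rule emeasure_NN) simp
  also have "\<dots> \<le> (\<integral>\<^sup>+u. ennreal 1 * indicator {x..y} u \<partial>lborel)"
    by (rule nn_integral_mono) (auto simp: std_le1 split: split_indicator)
  also have "\<dots> = ennreal (y - x)" by (subst nn_integral_cmult_indicator) (use xy in auto)
  finally show ?thesis using xy by (simp add: measure_def enn2real_leI)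
qed

lemma NN_Icc_pos: "x < y \<Longrightarrow> 0 < measure NN {x..y}"
proof -
  interpret prob_space NN by (rule NN_prob)
  assume xy: "x < y"
  define M where "M = max \<bar>x\<bar> \<bar>y\<bar>"
  have "(\<integral>\<^sup>+u. ennreal (std_normal_density M) * indicator {x..y} u \<partial>lborel) \<le> (\<integral>\<^sup>+u. ennreal (std_normal_density u) * indicator {x..y} u \<partial>lborel)"
  proof (rule nn_integral_mono)
    fix u show "ennreal (std_normal_density M) * indicator {x..y} u \<le> ennreal (std_normal_density u) * indicator {x..y} u"
    proof (cases "u \<in> {x..y}")
      case True then have "\<bar>u\<bar> \<le> M" by (auto simp: M_def)
      then show ?thesis using True std_anti by simp
    qed simp
  qed
  also have "\<dots> = emeasure NN {x..y}" by (rule emeasure_NN[symmetric]) simp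
  finally have "(\<integral>\<^sup>+u. ennreal (std_normal_density M) * indicator {x..y} u \<partial>lborel) \<le> emeasure NN {x..y}" .
  moreover have "(\<integral>\<^sup>+u. ennreal (std_normal_density M) * indicator {x..y} u \<partial>lborel) = ennreal (std_normal_density M * (y - x))"
    by (subst nn_integral_cmult_indicator) (use xy in \<open>auto simp: ennreal_mult\<close>)
  ultimately have "ennreal (std_normal_density M * (y - x)) \<le> emeasure NN {x..y}" by simp
  moreover have "0 < std_normal_density M * (y - x)" using xy by (simp add: normal_density_pos)
  ultimately have "std_normal_density M * (y - x) \<le> measure NN {x..y}"
    by (simp add: emeasure_eq_measure)
  then show ?thesis using \<open>0 < std_normal_density M * (y - x)\<close> by linarith
qed

lemma Phi_lip: "\<bar>Phi y - Phi x\<bar> \<le> \<bar>y - x\<bar>"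
proof (cases "x \<le> y")
  case True then show ?thesis using NN_Icc[of x y] NN_Icc_le[of x y] Phi_mono[of x y] by simp
next
  case False then show ?thesis using NN_Icc[of y x] NN_Icc_le[of y x] Phi_mono[of y x] by simp
qed

lemma Phi_strict: "x < y \<Longrightarrow> Phi x < Phi y"
  using NN_Icc[of x y] NN_Icc_pos[of x y] by simp

lemma Phi_cont: "continuous_on A Phi"
proof (rule continuous_onI)
  fix x e :: real assume "0 < e"
  then show "\<exists>d>0. \<forall>x'\<in>A. dist x' x < d \<longrightarrow> dist (Phi x') (Phi x) \<le> e"
    by (intro exI[of _ e]) (auto simp: dist_real_def intro: order_trans[OF Phi_lip])
qed

lemma Phi_isCont: "isCont Phi x"
  using Phi_cont[of UNIV] by (simp add: continuous_on_eq_continuous_at)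

lemma Phi_neg: "Phi (- x) = 1 - Phi x"
proof -
  have "emeasure NN {..-x} = (\<integral>\<^sup>+u. ennreal (std_normal_density u) * indicator {..-x} u \<partial>lborel)"
    by (rule emeasure_NN) simp
  also have "\<dots> = ennreal \<bar>-1::real\<bar> * (\<integral>\<^sup>+u. ennreal (std_normal_density (0 + -1 * u)) * indicator {..-x} (0 + -1 * u) \<partial>lborel)"
    by (rule nn_integral_real_affine) auto
  also have "\<dots> = (\<integral>\<^sup>+u. ennreal (std_normal_density u) * indicator {x..} u \<partial>lborel)"
    by (auto intro!: nn_integral_cong simp: std_normal_density_def indicator_def)
  also have "\<dots> = emeasure NN {x..}" by (rule emeasure_NN[symmetric]) simp
  finally have "measure NN {..-x} = measure NN {x..}" by (simp add: measure_def)
  then show ?thesis using Phi_NN NN_Ici by simp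
qed

lemma Phi_zero: "Phi 0 = 1/2" using Phi_neg[of 0] by simp

lemma Phi_at_top: "(Phi \<longlongrightarrow> 1) at_top"
proof -
  interpret real_distribution NN by (rule NN_real_dist)
  have "Phi = cdf NN" by (auto simp: Phi_NN cdf_def2)
  then show ?thesis using cdf_lim_at_top_prob by simp
qed

lemma crit_prop:
  assumes "0 < a" "a < 1/2"
  shows "Phi (crit a) = 1 - a" "0 < crit a"
proof -
  have "eventually (\<lambda>x. Phi x > 1 - a) at_top"
    using Phi_at_top assms by (intro order_tendstoD) auto
  then obtain X where X: "Phi X > 1 - a" "X \<ge> 0"
    by (metis eventually_at_top_linorder order_refl max.cobounded1 max.cobounded2)
  have "\<exists>c\<ge>0. c \<le> X \<and> Phi c = 1 - a"
    using IVT[of Phi 0 "1 - a" X] X assms Phi_zero Phi_isCont by auto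
  then obtain c where c: "Phi c = 1 - a" by blast
  have "crit a = c" unfolding crit_def
  proof (rule the_equality)
    fix c' assume "Phi c' = 1 - a"
    then show "c' = c" using c Phi_strict[of c c'] Phi_strict[of c' c] by (cases "c < c'"; cases "c' < c") auto
  qed (rule c)
  then show "Phi (crit a) = 1 - a" using c by simp
  then show "0 < crit a"
  proof -
    assume h: "Phi (crit a) = 1 - a"
    show "0 < crit a"
    proof (rule ccontr)
      assume "\<not> 0 < crit a"
      then have "Phi (crit a) \<le> Phi 0" by (intro Phi_mono) simp
      then show False using h Phi_zero assms by simp
    qed
  qed
qed

lemma normal_Icc:
  assumes s: "0 < s" and pq: "p \<le> q"
  shows "(\<integral>\<^sup>+x. ennreal (normal_density \<mu> s x) * indicator {p..q} x \<partial>lborel)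
         = ennreal (Phi ((q - \<mu>) / s) - Phi ((p - \<mu>) / s))"
proof -
  have "(\<integral>\<^sup>+x. ennreal (normal_density \<mu> s x) * indicator {p..q} x \<partial>lborel)
     = \<bar>s\<bar> * (\<integral>\<^sup>+x. ennreal (normal_density \<mu> s (\<mu> + s * x)) * indicator {p..q} (\<mu> + s * x) \<partial>lborel)"
    by (rule nn_integral_real_affine) (use s in auto)
  also have "\<dots> = (\<integral>\<^sup>+x. ennreal (std_normal_density x) * indicator {(p - \<mu>) / s..(q - \<mu>) / s} x \<partial>lborel)"
    using s
    apply (subst nn_integral_cmult[symmetric])
     apply simp
    apply (intro nn_integral_cong)
    apply (simp add: ennreal_mult[symmetric] indicator_def normal_density_def real_sqrt_mult field_simps power2_eq_square)
    done
  also have "\<dots> = emeasure NN {(p - \<mu>) / s..(q - \<mu>) / s}" by (rule emeasure_NN[symmetric]) simp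
  also have "\<dots> = ennreal (Phi ((q - \<mu>) / s) - Phi ((p - \<mu>) / s))"
  proof -
    interpret prob_space NN by (rule NN_prob)
    show ?thesis
      using pq s NN_Icc[of "(p - \<mu>) / s" "(q - \<mu>) / s"]
      by (simp add: divide_right_mono emeasure_eq_measure)
  qed
  finally show ?thesis .
qed



lemma normal_density_alt: "0 < s \<Longrightarrow> normal_density \<mu> s x = exp (-(x - \<mu>)\<^sup>2 / (2 * s\<^sup>2)) / (sqrt (2 * pi) * s)"
  unfolding normal_density_def by (simp add: real_sqrt_mult)

lemma gauss_exp:
  fixes a b y e :: real
  assumes a: "0 < a" and b: "0 < b"
  shows "-y\<^sup>2/(2*a) + -(y+e)\<^sup>2/(2*b) = -e\<^sup>2/(2*(a+b)) + -(y + e*a/(a+b))\<^sup>2/(2*(a*b/(a+b)))"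
proof -
  from a b have k: "a + b \<noteq> 0" by simp
  have g: "-(X/K)\<^sup>2/(2*(a*b/K)) = -X\<^sup>2/(2*a*b*K)" if "K \<noteq> 0" for X K :: real
    using a b that by (simp add: field_simps power2_eq_square)
  have q: "y + e*a/(a+b) = ((a+b)*y + e*a)/(a+b)" using k by (simp add: field_simps)
  show ?thesis unfolding q g[OF k] using a b k
    by (simp add: divide_simps) (simp add: power2_eq_square algebra_simps)
qed

lemma gauss_factor:
  fixes s0 s1 S :: real
  assumes s0: "0 < s0" and s1: "0 < s1" and S: "0 < S" "S\<^sup>2 = s0\<^sup>2 + s1\<^sup>2"
  shows "normal_density tau s0 x0 * normal_density (tau + D) s1 (x0 + d)
       = normal_density D S d * normal_density (tau + (D - d) * s0\<^sup>2 / S\<^sup>2) (s0 * s1 / S) x0"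
proof -
  have sv: "0 < s0 * s1 / S" using s0 s1 S by simp
  have e: "-(x0 - tau)\<^sup>2 / (2 * s0\<^sup>2) + -(x0 + d - (tau + D))\<^sup>2 / (2 * s1\<^sup>2)
      = -(d - D)\<^sup>2 / (2 * S\<^sup>2) + -(x0 - (tau + (D - d) * s0\<^sup>2 / S\<^sup>2))\<^sup>2 / (2 * (s0 * s1 / S)\<^sup>2)"
  proof -
    have 1: "x0 + d - (tau + D) = (x0 - tau) + (d - D)" by simp
    have 2: "x0 - (tau + (D - d) * s0\<^sup>2 / S\<^sup>2) = (x0 - tau) + (d - D) * s0\<^sup>2 / (s0\<^sup>2 + s1\<^sup>2)"
      unfolding S(2) by (simp add: algebra_simps add_divide_distrib[symmetric])
    have 3: "(s0 * s1 / S)\<^sup>2 = s0\<^sup>2 * s1\<^sup>2 / (s0\<^sup>2 + s1\<^sup>2)"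
      unfolding power_divide power_mult_distrib S(2) ..
    show ?thesis unfolding 1 2 3 unfolding S(2) using s0 s1 by (intro gauss_exp) auto
  qed
  have pp: "sqrt (2 * pi) * sqrt (2 * pi) = 2 * pi" by simp
  have nd: "normal_density m s x * normal_density m' s' x' = exp (-(x - m)\<^sup>2 / (2 * s\<^sup>2) + -(x' - m')\<^sup>2 / (2 * s'\<^sup>2)) / (2 * pi * s * s')"
    if "0 < s" "0 < s'" for m s x m' s' x'
    unfolding exp_add using that by (simp add: normal_density_alt pp[symmetric] mult_ac)
  show ?thesis unfolding nd[OF s0 s1] nd[OF S(1) sv] e using s0 s1 S by simp
qed

lemma pair_interval:
  fixes E :: "(real \<times> real) set" and lo hi :: "real \<Rightarrow> real"
  assumes s0: "0 < s0" and s1: "0 < s1" and S: "0 < S" "S\<^sup>2 = s0\<^sup>2 + s1\<^sup>2"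
  assumes E[measurable]: "E \<in> sets (borel \<Otimes>\<^sub>M borel)"
  assumes lohi: "\<And>d. lo d \<le> hi d"
  assumes Eiff: "\<And>x0 d. (x0, x0 + d) \<in> E \<longleftrightarrow> lo d \<le> x0 \<and> x0 \<le> hi d"
  shows "emeasure (density lborel (normal_density tau s0) \<Otimes>\<^sub>M density lborel (normal_density (tau + D) s1)) E
     = (\<integral>\<^sup>+d. ennreal (normal_density D S d) *
          ennreal (Phi ((hi d - (tau + (D - d) * s0\<^sup>2 / S\<^sup>2)) / (s0 * s1 / S))
                 - Phi ((lo d - (tau + (D - d) * s0\<^sup>2 / S\<^sup>2)) / (s0 * s1 / S))) \<partial>lborel)"
proof -
  define M0 where "M0 = density lborel (normal_density tau s0)"
  define M1 where "M1 = density lborel (normal_density (tau + D) s1)"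
  interpret M1: prob_space M1 unfolding M1_def using s1 by (rule prob_space_normal_density)
  have sv: "0 < s0 * s1 / S" using s0 s1 S by simp
  have [simp]: "sets M0 = sets borel" "sets M1 = sets borel" unfolding M0_def M1_def by auto
  have E': "E \<in> sets (M0 \<Otimes>\<^sub>M M1)"
    using E by (simp add: sets_pair_measure_cong[of M0 borel M1 borel])
  have "emeasure (M0 \<Otimes>\<^sub>M M1) E = (\<integral>\<^sup>+x0. emeasure M1 (Pair x0 -` E) \<partial>M0)"
    by (rule M1.emeasure_pair_measure_alt[OF E'])
  also have "\<dots> = (\<integral>\<^sup>+x0. (\<integral>\<^sup>+x1. ennreal (normal_density (tau + D) s1 x1) * indicator E (x0, x1) \<partial>lborel) \<partial>M0)"
  proof (rule nn_integral_cong)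
    fix x0
    have "Pair x0 -` E \<in> sets borel" by measurable
    then show "emeasure M1 (Pair x0 -` E) = (\<integral>\<^sup>+x1. ennreal (normal_density (tau + D) s1 x1) * indicator E (x0, x1) \<partial>lborel)"
      unfolding M1_def by (subst emeasure_density) (auto intro!: nn_integral_cong split: split_indicator)
  qed
  also have "\<dots> = (\<integral>\<^sup>+x0. ennreal (normal_density tau s0 x0) * (\<integral>\<^sup>+x1. ennreal (normal_density (tau + D) s1 x1) * indicator E (x0, x1) \<partial>lborel) \<partial>lborel)"
    unfolding M0_def by (subst nn_integral_density) measurable
  also have "\<dots> = (\<integral>\<^sup>+x0. (\<integral>\<^sup>+d. ennreal (normal_density tau s0 x0) * (ennreal (normal_density (tau + D) s1 (x0 + d)) * indicator E (x0, x0 + d)) \<partial>lborel) \<partial>lborel)"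
  proof (rule nn_integral_cong)
    fix x0
    have "(\<integral>\<^sup>+x1. ennreal (normal_density (tau + D) s1 x1) * indicator E (x0, x1) \<partial>lborel)
        = ennreal \<bar>1::real\<bar> * (\<integral>\<^sup>+d. ennreal (normal_density (tau + D) s1 (x0 + 1 * d)) * indicator E (x0, x0 + 1 * d) \<partial>lborel)"
      by (rule nn_integral_real_affine) auto
    then show "ennreal (normal_density tau s0 x0) * (\<integral>\<^sup>+x1. ennreal (normal_density (tau + D) s1 x1) * indicator E (x0, x1) \<partial>lborel)
       = (\<integral>\<^sup>+d. ennreal (normal_density tau s0 x0) * (ennreal (normal_density (tau + D) s1 (x0 + d)) * indicator E (x0, x0 + d)) \<partial>lborel)"
      by (subst nn_integral_cmult) auto
  qed
  also have "\<dots> = (\<integral>\<^sup>+d. (\<integral>\<^sup>+x0. ennreal (normal_density tau s0 x0) * (ennreal (normal_density (tau + D) s1 (x0 + d)) * indicator E (x0, x0 + d)) \<partial>lborel) \<partial>lborel)"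
    by (rule lborel_pair.Fubini'[symmetric]) measurable
  also have "\<dots> = (\<integral>\<^sup>+d. ennreal (normal_density D S d) * (\<integral>\<^sup>+x0. ennreal (normal_density (tau + (D - d) * s0\<^sup>2 / S\<^sup>2) (s0 * s1 / S) x0) * indicator {lo d..hi d} x0 \<partial>lborel) \<partial>lborel)"
  proof (rule nn_integral_cong)
    fix d
    show "(\<integral>\<^sup>+x0. ennreal (normal_density tau s0 x0) * (ennreal (normal_density (tau + D) s1 (x0 + d)) * indicator E (x0, x0 + d)) \<partial>lborel)
      = ennreal (normal_density D S d) * (\<integral>\<^sup>+x0. ennreal (normal_density (tau + (D - d) * s0\<^sup>2 / S\<^sup>2) (s0 * s1 / S) x0) * indicator {lo d..hi d} x0 \<partial>lborel)"
      apply (subst nn_integral_cmult[symmetric])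
       apply simp
      apply (rule nn_integral_cong)
      apply (simp add: mult.assoc[symmetric] ennreal_mult[symmetric] gauss_factor[OF s0 s1 S] indicator_def Eiff)
      done
  qed
  also have "\<dots> = (\<integral>\<^sup>+d. ennreal (normal_density D S d) *
          ennreal (Phi ((hi d - (tau + (D - d) * s0\<^sup>2 / S\<^sup>2)) / (s0 * s1 / S))
                 - Phi ((lo d - (tau + (D - d) * s0\<^sup>2 / S\<^sup>2)) / (s0 * s1 / S))) \<partial>lborel)"
    by (intro nn_integral_cong arg_cong2[where f="(*)"] refl normal_Icc sv lohi)
  finally show ?thesis unfolding M0_def M1_def .
qed



lemma Phi_measurable[measurable]: "Phi \<in> borel_measurable borel"
  by (rule borel_measurable_continuous_onI) (rule Phi_cont)

locale setting =
  fixes s0 s1 alpha tau :: real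
  assumes s0: "0 < s0" and s1: "0 < s1" and al: "0 < alpha" "alpha < 1"
begin

abbreviation "S \<equiv> sig s0 s1"
abbreviation "g \<equiv> gam s0 s1"
abbreviation "c \<equiv> crit (alpha / 2)"

lemma S_pos: "0 < S" unfolding sig_def using s0 by (simp add: add_pos_nonneg)
lemma S_sq: "S\<^sup>2 = s0\<^sup>2 + s1\<^sup>2" unfolding sig_def by (simp add: add_nonneg_nonneg)
lemma c_pos: "0 < c" and Phi_c: "Phi c = 1 - alpha / 2"
  using crit_prop[of "alpha/2"] al by auto

lemma sq1g: "sqrt (1 + g) = S / s1"
proof -
  have "1 + g = S\<^sup>2 / s1\<^sup>2" unfolding gam_def S_sq using s1 by (simp add: field_simps)
  then show ?thesis using S_pos s1 by (simp add: real_sqrt_divide)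
qed
lemma kk: "g / (1 + g) = s0\<^sup>2 / S\<^sup>2"
  unfolding gam_def S_sq using s1 s0 by (simp add: field_simps add_pos_nonneg)
lemma sqg: "sqrt g = s0 / s1" unfolding gam_def using s0 s1 by (simp add: real_sqrt_divide)
lemma sqgg: "sqrt (g / (1 + g)) = s0 / S" unfolding kk using s0 S_pos by (simp add: real_sqrt_divide)
lemma ggs: "g / sqrt (1 + g) = s0\<^sup>2 / (s1 * S)" unfolding sq1g unfolding gam_def using s1 S_pos
  by (simp add: field_simps power2_eq_square)
lemma ell: "L / sqrt (1 + g) * s0 = L * (s0 * s1 / S)" unfolding sq1g using s1 S_pos by (simp add: field_simps)

definition Qf :: "real \<Rightarrow> real \<Rightarrow> real \<Rightarrow> real" where
  "Qf D L u = (if \<bar>u + D / S\<bar> \<le> c then Phi (L - D * s0 / (S * s1)) - Phi (- L - D * s0 / (S * s1))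
               else Phi (L + u * s0 / s1) - Phi (- L + u * s0 / s1))"

lemma Qf_measurable[measurable]: "Qf D L \<in> borel_measurable borel"
  unfolding Qf_def by measurable

definition EE :: "real \<Rightarrow> (real \<times> real) set" where
  "EE L = {p. \<bar>tau_PT s0 s1 alpha (fst p) (snd p) - tau\<bar> \<le> L / sqrt (1 + g) * s0}"

lemma EE_meas[measurable]: "EE L \<in> sets (borel \<Otimes>\<^sub>M borel)"
proof -
  have "(\<lambda>p. tau_PT s0 s1 alpha (fst p) (snd p)) \<in> borel_measurable (borel \<Otimes>\<^sub>M borel)"
    unfolding tau_PT_def by measurable
  then have "Measurable.pred (borel \<Otimes>\<^sub>M borel) (\<lambda>p. \<bar>tau_PT s0 s1 alpha (fst p) (snd p) - tau\<bar> \<le> L / sqrt (1 + g) * s0)"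
    by measurable
  then show ?thesis unfolding EE_def Measurable.pred_def by (simp add: space_pair_measure)
qed

lemma cover_nn:
  assumes L: "0 \<le> L"
  shows "emeasure (obs_model s0 s1 tau D) (EE L) = (\<integral>\<^sup>+u. ennreal (std_normal_density u * Qf D L u) \<partial>lborel)"
proof -
  define k where "k = g / (1 + g)"
  define l where "l = L / sqrt (1 + g) * s0"
  define lo where "lo d = tau - (if \<bar>d\<bar> \<le> S * c then k * d else 0) - l" for d
  define hi where "hi d = tau - (if \<bar>d\<bar> \<le> S * c then k * d else 0) + l" for d
  have l0: "0 \<le> l" unfolding l_def ell using L s0 s1 S_pos by simp
  have Eiff: "(x0, x0 + d) \<in> EE L \<longleftrightarrow> lo d \<le> x0 \<and> x0 \<le> hi d" for x0 d
    unfolding EE_def tau_PT_def lo_def hi_def k_def l_def by (auto simp: abs_le_iff)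
  have "emeasure (obs_model s0 s1 tau D) (EE L)
     = (\<integral>\<^sup>+d. ennreal (normal_density D S d) *
          ennreal (Phi ((hi d - (tau + (D - d) * s0\<^sup>2 / S\<^sup>2)) / (s0 * s1 / S))
                 - Phi ((lo d - (tau + (D - d) * s0\<^sup>2 / S\<^sup>2)) / (s0 * s1 / S))) \<partial>lborel)"
    unfolding obs_model_def
    by (rule pair_interval[OF s0 s1 S_pos S_sq EE_meas]) (use l0 Eiff in \<open>auto simp: lo_def hi_def\<close>)
  also have "\<dots> = ennreal \<bar>S\<bar> * (\<integral>\<^sup>+u. ennreal (normal_density D S (D + S * u)) *
          ennreal (Phi ((hi (D + S * u) - (tau + (D - (D + S * u)) * s0\<^sup>2 / S\<^sup>2)) / (s0 * s1 / S))
                 - Phi ((lo (D + S * u) - (tau + (D - (D + S * u)) * s0\<^sup>2 / S\<^sup>2)) / (s0 * s1 / S))) \<partial>lborel)"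
    by (rule nn_integral_real_affine) (use S_pos in \<open>auto simp: lo_def hi_def\<close>)
  also have "\<dots> = (\<integral>\<^sup>+u. ennreal (std_normal_density u * Qf D L u) \<partial>lborel)"
  proof -
    have "ennreal S * (ennreal (normal_density D S (D + S * u)) *
          ennreal (Phi ((hi (D + S * u) - (tau + (D - (D + S * u)) * s0\<^sup>2 / S\<^sup>2)) / (s0 * s1 / S))
                 - Phi ((lo (D + S * u) - (tau + (D - (D + S * u)) * s0\<^sup>2 / S\<^sup>2)) / (s0 * s1 / S))))
        = ennreal (std_normal_density u * Qf D L u)" for u
    proof -
      have nd: "S * normal_density D S (D + S * u) = std_normal_density u"
        using S_pos by (simp add: normal_density_alt power_mult_distrib)
      have acc: "\<bar>D + S * u\<bar> \<le> S * c \<longleftrightarrow> \<bar>u + D / S\<bar> \<le> c"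
      proof -
        have "D + S * u = S * (u + D / S)" using S_pos by (simp add: field_simps)
        then show ?thesis using S_pos by (simp add: abs_mult)
      qed
      have a1: "(tau - k * (D + S * u) + l - (tau + (D - (D + S * u)) * s0\<^sup>2 / S\<^sup>2)) / (s0 * s1 / S) = L - D * s0 / (S * s1)"
        unfolding k_def l_def kk ell using s0 s1 S_pos by (simp add: field_simps power2_eq_square)
      have a2: "(tau - k * (D + S * u) - l - (tau + (D - (D + S * u)) * s0\<^sup>2 / S\<^sup>2)) / (s0 * s1 / S) = - L - D * s0 / (S * s1)"
        unfolding k_def l_def kk ell using s0 s1 S_pos by (simp add: field_simps power2_eq_square)
      have r1: "(tau + l - (tau + (D - (D + S * u)) * s0\<^sup>2 / S\<^sup>2)) / (s0 * s1 / S) = L + u * s0 / s1"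
        unfolding l_def ell using s0 s1 S_pos by (simp add: field_simps power2_eq_square)
      have r2: "(tau - l - (tau + (D - (D + S * u)) * s0\<^sup>2 / S\<^sup>2)) / (s0 * s1 / S) = - L + u * s0 / s1"
        unfolding l_def ell using s0 s1 S_pos by (simp add: field_simps power2_eq_square)
      have Q0: "0 \<le> Qf D L u" unfolding Qf_def using Phi_mono L by auto
      have pw: "Phi ((hi (D + S * u) - (tau + (D - (D + S * u)) * s0\<^sup>2 / S\<^sup>2)) / (s0 * s1 / S))
                 - Phi ((lo (D + S * u) - (tau + (D - (D + S * u)) * s0\<^sup>2 / S\<^sup>2)) / (s0 * s1 / S)) = Qf D L u"
      proof (cases "\<bar>u + D / S\<bar> \<le> c")
        case True
        then have "hi (D + S * u) = tau - k * (D + S * u) + l" "lo (D + S * u) = tau - k * (D + S * u) - l"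
          unfolding hi_def lo_def using acc by auto
        then show ?thesis unfolding Qf_def using True a1 a2 by simp
      next
        case False
        then have "hi (D + S * u) = tau + l" "lo (D + S * u) = tau - l"
          unfolding hi_def lo_def using acc by auto
        then show ?thesis unfolding Qf_def using False r1 r2 by simp
      qed
      show ?thesis
        unfolding pw using Q0 S_pos
        by (simp add: ennreal_mult[symmetric] mult.assoc[symmetric] nd)
    qed
    then show ?thesis using S_pos
      by (subst nn_integral_cmult[symmetric]) (auto simp: lo_def hi_def)
  qed
  finally show ?thesis .
qed

end


lemma Phi_sym_diff: "Phi (L + e) - Phi (- L + e) = Phi (L - e) - Phi (- L - e)"
  using Phi_neg[of "L + e"] Phi_neg[of "- L + e"] by (simp add: algebra_simps)

lemma int_NN: "A \<in> sets borel \<Longrightarrow> (\<integral>u. indicator A u * std_normal_density u \<partial>lborel) = measure NN A"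
proof -
  assume A: "A \<in> sets borel"
  have "integral\<^sup>L NN (indicator A) = (\<integral>u. indicator A u * std_normal_density u \<partial>lborel)"
    unfolding NN_def using A by (subst integral_density) (auto simp: mult.commute)
  then show ?thesis by simp
qed

lemma integrable_std_bound:
  assumes [measurable]: "f \<in> borel_measurable borel" and b: "\<And>u. \<bar>f u\<bar> \<le> std_normal_density u"
  shows "integrable lborel f"
  by (rule Bochner_Integration.integrable_bound[of _ std_normal_density]) (auto simp: b)

context setting begin

lemma Qf_nonneg: "0 \<le> L \<Longrightarrow> 0 \<le> Qf D L u"
  unfolding Qf_def using Phi_mono by auto
lemma Qf_le1: "Qf D L u \<le> 1"
proof -
  have "Phi x - Phi y \<le> 1" for x y using Phi_le1[of x] Phi_nonneg[of y] by linarith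
  then show ?thesis unfolding Qf_def by auto
qed

lemma Qf_int: "0 \<le> L \<Longrightarrow> integrable lborel (\<lambda>u. std_normal_density u * Qf D L u)"
  by (rule integrable_std_bound) (auto simp: abs_mult Qf_nonneg Qf_le1 intro!: mult_left_le)

lemma cover_eq_EE: "cover_prob s0 s1 alpha tau D L = measure (obs_model s0 s1 tau D) (EE L)"
  unfolding cover_prob_def EE_def ..

lemma cover_int:
  assumes L: "0 \<le> L"
  shows "cover_prob s0 s1 alpha tau D L = (\<integral>u. std_normal_density u * Qf D L u \<partial>lborel)"
proof -
  have "emeasure (obs_model s0 s1 tau D) (EE L) = ennreal (\<integral>u. std_normal_density u * Qf D L u \<partial>lborel)"
    unfolding cover_nn[OF L] using L
    by (intro nn_integral_eq_integral Qf_int) (auto simp: Qf_nonneg)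
  moreover have "0 \<le> (\<integral>u. std_normal_density u * Qf D L u \<partial>lborel)"
    using L by (intro Bochner_Integration.integral_nonneg) (auto simp: Qf_nonneg)
  ultimately show ?thesis unfolding cover_eq_EE measure_def by simp
qed

lemma cover_neg: "L < 0 \<Longrightarrow> cover_prob s0 s1 alpha tau D L = 0"
proof -
  assume "L < 0"
  then have "L / sqrt (1 + g) * s0 < 0" unfolding ell using s0 s1 S_pos by (simp add: mult_neg_pos divide_neg_pos)
  then have "EE L = {}" unfolding EE_def by auto
  then show ?thesis unfolding cover_eq_EE by simp
qed

lemma Qf_sym: "std_normal_density (- u) * Qf (- D) L (- u) = std_normal_density u * Qf D L u"
proof -
  have "\<bar>- u + - D / S\<bar> = \<bar>u + D / S\<bar>" by (simp add: abs_minus_commute[of "-u"] algebra_simps)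
  moreover have "Phi (L - - D * s0 / (S * s1)) - Phi (- L - - D * s0 / (S * s1)) = Phi (L - D * s0 / (S * s1)) - Phi (- L - D * s0 / (S * s1))"
    using Phi_sym_diff[of L "D * s0 / (S * s1)"] by simp
  moreover have "Phi (L + - u * s0 / s1) - Phi (- L + - u * s0 / s1) = Phi (L + u * s0 / s1) - Phi (- L + u * s0 / s1)"
    using Phi_sym_diff[of L "u * s0 / s1"] by simp
  ultimately show ?thesis unfolding Qf_def by (simp add: std_normal_density_def)
qed

lemma cover_sym: "cover_prob s0 s1 alpha tau (- D) L = cover_prob s0 s1 alpha tau D L"
proof (cases "0 \<le> L")
  case True
  have "(\<integral>u. std_normal_density u * Qf (- D) L u \<partial>lborel)
      = \<bar>-1\<bar> *\<^sub>R (\<integral>u. std_normal_density (0 + -1 * u) * Qf (- D) L (0 + -1 * u) \<partial>lborel)"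
    by (rule lborel_integral_real_affine) simp
  also have "\<dots> = (\<integral>u. std_normal_density u * Qf D L u \<partial>lborel)"
    using Qf_sym by simp
  finally show ?thesis using True by (simp add: cover_int)
qed (simp add: cover_neg)

end


context setting begin

lemma G_formula:
  assumes L: "0 \<le> L"
  shows "G_PT s0 s1 alpha tau t L =
           (Phi (c - sqrt (g / (1 + g)) * t) - Phi (- c - sqrt (g / (1 + g)) * t)) * (Phi (L - g / sqrt (1 + g) * t) - Phi (- L - g / sqrt (1 + g) * t))
           + (LBINT u:{..- c - sqrt (g / (1 + g)) * t}. (Phi (L + sqrt g * u) - Phi (- L + sqrt g * u)) * phi u)
           + (LBINT u:{c - sqrt (g / (1 + g)) * t..}. (Phi (L + sqrt g * u) - Phi (- L + sqrt g * u)) * phi u)"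
proof -
  define a where "a = sqrt (g / (1 + g)) * t"
  define d where "d = g / sqrt (1 + g) * t"
  define h where "h u = Phi (L + sqrt g * u) - Phi (- L + sqrt g * u)" for u
  define A where "A = Phi (L - d) - Phi (- L - d)"
  have a: "t * s0 / S = a" unfolding a_def sqgg by simp
  have d: "t * s0 * s0 / (S * s1) = d" unfolding d_def ggs by (simp add: power2_eq_square mult_ac)
  have hs: "u * s0 / s1 = sqrt g * u" for u unfolding sqg by simp
  have Q: "Qf (t * s0) L u = (if \<bar>u + a\<bar> \<le> c then A else h u)" for u
    unfolding Qf_def a d A_def h_def hs ..
  have h01: "0 \<le> h u" "h u \<le> 1" for u
    unfolding h_def using Phi_mono[of "- L + sqrt g * u" "L + sqrt g * u"] L Phi_le1[of "L + sqrt g * u"] Phi_nonneg[of "- L + sqrt g * u"]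
    by auto
  have A01: "0 \<le> A" "A \<le> 1"
    unfolding A_def using Phi_mono[of "- L - d" "L - d"] L Phi_le1[of "L - d"] Phi_nonneg[of "- L - d"]
    by auto
  have [measurable]: "h \<in> borel_measurable borel" unfolding h_def by measurable
  have phi: "phi = std_normal_density" by (simp add: phi_def fun_eq_iff)
  define f1 where "f1 u = indicator {- c - a..c - a} u * std_normal_density u * A" for u
  define f2 where "f2 u = indicator {..- c - a} u *\<^sub>R (h u * phi u)" for u
  define f3 where "f3 u = indicator {c - a..} u *\<^sub>R (h u * phi u)" for u
  have [measurable]: "f1 \<in> borel_measurable borel" "f2 \<in> borel_measurable borel" "f3 \<in> borel_measurable borel"
    unfolding f1_def f2_def f3_def phi by measurable
  have i1: "integrable lborel f1"
    by (rule integrable_std_bound) (auto simp: f1_def abs_mult A01 intro!: mult_left_le split: split_indicator)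
  have i2: "integrable lborel f2"
    by (rule integrable_std_bound) (auto simp: f2_def phi abs_mult h01 intro!: mult_left_le_one_le split: split_indicator)
  have i3: "integrable lborel f3"
    by (rule integrable_std_bound) (auto simp: f3_def phi abs_mult h01 intro!: mult_left_le_one_le split: split_indicator)
  have pw: "std_normal_density u * Qf (t * s0) L u = f1 u + f2 u + f3 u" if "u \<noteq> - c - a" "u \<noteq> c - a" for u
    using that c_pos unfolding Q f1_def f2_def f3_def phi
    by (auto simp: indicator_def abs_le_iff)
  have "G_PT s0 s1 alpha tau t L = (\<integral>u. std_normal_density u * Qf (t * s0) L u \<partial>lborel)"
    unfolding G_PT_def using L by (rule cover_int)
  also have "\<dots> = (\<integral>u. f1 u + f2 u + f3 u \<partial>lborel)"
  proof (rule integral_cong_AE)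
    show "AE u in lborel. std_normal_density u * Qf (t * s0) L u = f1 u + f2 u + f3 u"
      using AE_lborel_singleton[of "- c - a"] AE_lborel_singleton[of "c - a"]
      by eventually_elim (use pw in auto)
  qed auto
  also have "\<dots> = integral\<^sup>L lborel f1 + integral\<^sup>L lborel f2 + integral\<^sup>L lborel f3"
    using i1 i2 i3 by simp
  also have "integral\<^sup>L lborel f1 = (Phi (c - a) - Phi (- c - a)) * A"
  proof -
    have "integral\<^sup>L lborel f1 = (\<integral>u. indicator {- c - a..c - a} u * std_normal_density u \<partial>lborel) * A"
      unfolding f1_def by simp
    also have "\<dots> = (Phi (c - a) - Phi (- c - a)) * A"
      using c_pos by (simp add: int_NN NN_Icc)
    finally show ?thesis .
  qed
  finally show ?thesis
    unfolding f2_def f3_def A_def h_def a_def d_def set_lebesgue_integral_def by simp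
qed

end


lemma int_ind_Icc: "a \<le> b \<Longrightarrow> integrable lborel (indicator {a..b::real} :: real \<Rightarrow> real)"
  by (simp add: integrable_indicator_iff emeasure_lborel_Icc)

lemma half_lip:
  fixes f :: "real \<Rightarrow> real"
  assumes [measurable]: "f \<in> borel_measurable borel" and b: "\<And>u. \<bar>f u\<bar> \<le> std_normal_density u"
  assumes B: "\<And>x. B x \<in> sets borel"
  assumes ind: "\<And>u. \<bar>indicator (B x) u - indicator (B y) u\<bar> \<le> (indicator {min x y..max x y} u :: real)"
  shows "\<bar>(LBINT u:B x. f u) - (LBINT u:B y. f u)\<bar> \<le> \<bar>x - y\<bar>"
proof -
  have [measurable]: "B x \<in> sets borel" "B y \<in> sets borel" using B by auto
  have ib: "integrable lborel (\<lambda>u. indicator (B z) u * f u)" if "B z \<in> sets borel" for z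
    using that by (intro integrable_std_bound) (auto simp: abs_mult b intro!: mult_le_one order_trans[OF _ std_le1] split: split_indicator)
  have "(LBINT u:B x. f u) - (LBINT u:B y. f u) = (\<integral>u. (indicator (B x) u - indicator (B y) u) * f u \<partial>lborel)"
    unfolding set_lebesgue_integral_def using ib[of x] ib[of y]
    by (simp add: left_diff_distrib)
  also have "\<bar>\<dots>\<bar> \<le> (\<integral>u. \<bar>(indicator (B x) u - indicator (B y) u) * f u\<bar> \<partial>lborel)"
    by (rule integral_abs_bound)
  also have "\<dots> \<le> (\<integral>u. indicator {min x y..max x y} u \<partial>lborel)"
  proof (rule integral_mono)
    show "integrable lborel (\<lambda>u. \<bar>(indicator (B x) u - indicator (B y) u) * f u\<bar>)"
      using ib[of x] ib[of y] by (simp add: left_diff_distrib)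
    show "integrable lborel (\<lambda>u. indicator {min x y..max x y} u :: real)" by (rule int_ind_Icc) simp
    fix u
    have "\<bar>f u\<bar> \<le> 1" using b[of u] std_le1[of u] by linarith
    then show "\<bar>(indicator (B x) u - indicator (B y) u) * f u\<bar> \<le> indicator {min x y..max x y} u"
      unfolding abs_mult
      using mult_right_le_one_le[of "\<bar>indicator (B x) u - indicator (B y) u\<bar>" "\<bar>f u\<bar>"] ind[of u] by auto
  qed
  also have "\<dots> = \<bar>x - y\<bar>" by (simp add: measure_lborel_Icc) (simp add: max_def min_def)
  finally show ?thesis .
qed

lemma Iic_lip:
  fixes f :: "real \<Rightarrow> real"
  assumes [measurable]: "f \<in> borel_measurable borel" and b: "\<And>u. \<bar>f u\<bar> \<le> std_normal_density u"
  shows "\<bar>(LBINT u:{..x}. f u) - (LBINT u:{..y}. f u)\<bar> \<le> \<bar>x - y\<bar>"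
  by (rule half_lip[OF assms]) (auto simp: indicator_def)

lemma Ici_lip:
  fixes f :: "real \<Rightarrow> real"
  assumes [measurable]: "f \<in> borel_measurable borel" and b: "\<And>u. \<bar>f u\<bar> \<le> std_normal_density u"
  shows "\<bar>(LBINT u:{x..}. f u) - (LBINT u:{y..}. f u)\<bar> \<le> \<bar>x - y\<bar>"
  by (rule half_lip[OF assms]) (auto simp: indicator_def)

lemma lip_cont: "(\<And>x y. \<bar>F x - F y\<bar> \<le> \<bar>x - y\<bar>) \<Longrightarrow> continuous_on A (F :: real \<Rightarrow> real)"
proof (rule continuous_onI)
  fix x e :: real assume l: "\<And>x y. \<bar>F x - F y\<bar> \<le> \<bar>x - y\<bar>" and "0 < e"
  then show "\<exists>d>0. \<forall>x'\<in>A. dist x' x < d \<longrightarrow> dist (F x') (F x) \<le> e"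
    by (intro exI[of _ e]) (auto simp: dist_real_def intro: order_trans[OF l])
qed

lemma lip_cont_comp: "(\<And>x y. \<bar>F x - F y\<bar> \<le> \<bar>x - y\<bar>) \<Longrightarrow> continuous_on A k \<Longrightarrow> continuous_on A (\<lambda>t. (F :: real \<Rightarrow> real) (k t))"
  using continuous_on_compose2[of UNIV F A k] lip_cont[of F UNIV] by auto



lemma Phi_cont_comp[continuous_intros]: "continuous_on A k \<Longrightarrow> continuous_on A (\<lambda>t. Phi (k t))"
  by (rule lip_cont_comp) (rule Phi_lip)

lemma Phi_tend_top: "((\<lambda>n::nat. Phi (real n + x)) \<longlongrightarrow> 1) sequentially"
proof -
  have "filterlim (\<lambda>n::nat. x + real n) at_top sequentially"
    by (rule filterlim_tendsto_add_at_top[OF tendsto_const filterlim_real_sequentially])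
  then have "filterlim (\<lambda>n::nat. real n + x) at_top sequentially" by (simp add: add.commute)
  then show ?thesis using Phi_at_top by (rule filterlim_compose[rotated])
qed

lemma Phi_band_lim: "((\<lambda>n::nat. Phi (real n + x) - Phi (- real n + x)) \<longlongrightarrow> 1) sequentially"
proof -
  have "Phi (- real n + x) = 1 - Phi (real n + - x)" for n using Phi_neg[of "real n + - x"] by simp
  then have "(\<lambda>n::nat. Phi (real n + x) - Phi (- real n + x)) = (\<lambda>n. Phi (real n + x) - (1 - Phi (real n + - x)))"
    by simp
  moreover have "((\<lambda>n. Phi (real n + x) - (1 - Phi (real n + - x))) \<longlongrightarrow> 1 - (1 - 1)) sequentially"
    by (intro tendsto_intros Phi_tend_top)
  ultimately show ?thesis by simp
qed

context setting begin

lemma G_nonneg: "0 \<le> G_PT s0 s1 alpha tau t L"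
  unfolding G_PT_def cover_prob_def by simp

lemma G_sym: "G_PT s0 s1 alpha tau (- t) L = G_PT s0 s1 alpha tau t L"
  unfolding G_PT_def using cover_sym[of "t * s0" L] by simp

lemma G_int: "0 \<le> L \<Longrightarrow> G_PT s0 s1 alpha tau t L = (\<integral>u. std_normal_density u * Qf (t * s0) L u \<partial>lborel)"
  unfolding G_PT_def by (rule cover_int)

lemma G_zero: "G_PT s0 s1 alpha tau t 0 = 0"
proof -
  have "Qf D 0 u = 0" for D u unfolding Qf_def by simp
  then show ?thesis unfolding G_int[OF order_refl] by simp
qed

lemma Qf_lip: "\<bar>Qf D L u - Qf D L' u\<bar> \<le> 2 * \<bar>L - L'\<bar>"
proof -
  have *: "\<bar>(Phi (L + e) - Phi (- L + e)) - (Phi (L' + e) - Phi (- L' + e))\<bar> \<le> 2 * \<bar>L - L'\<bar>" for e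
  proof -
    have h: "\<bar>(p - q) - (p' - q')\<bar> \<le> 2 * k" if "\<bar>p' - p\<bar> \<le> k" "\<bar>q' - q\<bar> \<le> k" for p q p' q' k :: real
      using that by (simp add: abs_le_iff)
    have "\<bar>(L' + e) - (L + e)\<bar> = \<bar>L - L'\<bar>" "\<bar>(- L' + e) - (- L + e)\<bar> = \<bar>L - L'\<bar>" by simp_all
    then show ?thesis using h Phi_lip[of "L' + e" "L + e"] Phi_lip[of "- L' + e" "- L + e"] by metis
  qed
  show ?thesis unfolding Qf_def using *[of "- (D * s0 / (S * s1))"] *[of "u * s0 / s1"] by simp
qed

lemma int_diffQ:
  assumes "0 \<le> L" "0 \<le> L'"
  shows "integrable lborel (\<lambda>u. std_normal_density u * (Qf D L u - Qf D L' u))"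
    "(\<integral>u. std_normal_density u * (Qf D L u - Qf D L' u) \<partial>lborel)
      = (\<integral>u. std_normal_density u * Qf D L u \<partial>lborel) - (\<integral>u. std_normal_density u * Qf D L' u \<partial>lborel)"
proof -
  have e: "(\<lambda>u. std_normal_density u * (Qf D L u - Qf D L' u)) = (\<lambda>u. std_normal_density u * Qf D L u - std_normal_density u * Qf D L' u)"
    by (rule ext) (simp only: right_diff_distrib)
  show "integrable lborel (\<lambda>u. std_normal_density u * (Qf D L u - Qf D L' u))"
    unfolding e by (intro Bochner_Integration.integrable_diff Qf_int assms)
  show "(\<integral>u. std_normal_density u * (Qf D L u - Qf D L' u) \<partial>lborel)
      = (\<integral>u. std_normal_density u * Qf D L u \<partial>lborel) - (\<integral>u. std_normal_density u * Qf D L' u \<partial>lborel)"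
    unfolding e by (intro Bochner_Integration.integral_diff Qf_int assms)
qed

lemma G_lipL:
  assumes "0 \<le> L" "0 \<le> L'"
  shows "\<bar>G_PT s0 s1 alpha tau t L - G_PT s0 s1 alpha tau t L'\<bar> \<le> 2 * \<bar>L - L'\<bar>"
proof -
  let ?D = "t * s0"
  have eq: "G_PT s0 s1 alpha tau t L - G_PT s0 s1 alpha tau t L' = (\<integral>u. std_normal_density u * (Qf ?D L u - Qf ?D L' u) \<partial>lborel)"
    unfolding G_int[OF assms(1)] G_int[OF assms(2)] int_diffQ(2)[OF assms] ..
  have "\<bar>(\<integral>u. std_normal_density u * (Qf ?D L u - Qf ?D L' u) \<partial>lborel)\<bar> \<le> (\<integral>u. \<bar>std_normal_density u * (Qf ?D L u - Qf ?D L' u)\<bar> \<partial>lborel)"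
    by (rule integral_abs_bound)
  also have "\<dots> \<le> (\<integral>u. std_normal_density u * (2 * \<bar>L - L'\<bar>) \<partial>lborel)"
  proof (rule integral_mono)
    show "integrable lborel (\<lambda>u. \<bar>std_normal_density u * (Qf ?D L u - Qf ?D L' u)\<bar>)"
      by (rule integrable_abs) (rule int_diffQ(1)[OF assms])
    show "integrable lborel (\<lambda>u. std_normal_density u * (2 * \<bar>L - L'\<bar>))"
      by (rule integrable_mult_left) (rule integrable_normal_density, rule zero_less_one)
    fix u show "\<bar>std_normal_density u * (Qf ?D L u - Qf ?D L' u)\<bar> \<le> std_normal_density u * (2 * \<bar>L - L'\<bar>)"
      unfolding abs_mult abs_of_nonneg[OF normal_density_nonneg] by (rule mult_left_mono[OF Qf_lip normal_density_nonneg])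
  qed
  also have "\<dots> = (\<integral>u. std_normal_density u \<partial>lborel) * (2 * \<bar>L - L'\<bar>)"
    by (rule integral_mult_left_zero)
  also have "\<dots> = 2 * \<bar>L - L'\<bar>" using integral_normal_density[of 1 0] by simp
  finally show ?thesis unfolding eq .
qed

lemma G_strict:
  assumes L: "0 \<le> L" and LL: "L < L'"
  shows "G_PT s0 s1 alpha tau t L < G_PT s0 s1 alpha tau t L'"
proof -
  let ?D = "t * s0"
  define e where "e = ?D * s0 / (S * s1)"
  define AA where "AA = (Phi (L' - e) - Phi (- L' - e)) - (Phi (L - e) - Phi (- L - e))"
  define J where "J = {- ?D / S - c..c - ?D / S}"
  have L': "0 \<le> L'" using L LL by simp
  have AA: "0 < AA" unfolding AA_def using Phi_strict[of "L - e" "L' - e"] Phi_strict[of "- L' - e" "- L - e"] LL by simp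
  have J: "0 < measure NN J" unfolding J_def using c_pos by (intro NN_Icc_pos) simp
  have "(\<integral>u. indicator J u * std_normal_density u * AA \<partial>lborel) \<le> (\<integral>u. std_normal_density u * (Qf ?D L' u - Qf ?D L u) \<partial>lborel)"
  proof (rule integral_mono)
    show "integrable lborel (\<lambda>u. indicator J u * std_normal_density u * AA)"
      unfolding J_def by (intro integrable_mult_left integrable_std_bound) (auto simp: abs_mult split: split_indicator)
    show "integrable lborel (\<lambda>u. std_normal_density u * (Qf ?D L' u - Qf ?D L u))"
      using Qf_int[OF L] Qf_int[OF L'] by (simp add: right_diff_distrib)
    fix u
    have hq: "indicator J u * AA \<le> Qf ?D L' u - Qf ?D L u"
    proof (cases "\<bar>u + ?D / S\<bar> \<le> c")
      case True
      then have "u \<in> J" unfolding J_def by (auto simp: abs_le_iff)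
      then show ?thesis using True unfolding Qf_def AA_def e_def by simp
    next
      case False
      then have "u \<notin> J" unfolding J_def by (auto simp: abs_le_iff)
      moreover have "Phi (L + u * s0 / s1) \<le> Phi (L' + u * s0 / s1)" "Phi (- L' + u * s0 / s1) \<le> Phi (- L + u * s0 / s1)"
        using LL by (auto intro!: Phi_mono)
      ultimately show ?thesis using False unfolding Qf_def by simp
    qed
    show "indicator J u * std_normal_density u * AA \<le> std_normal_density u * (Qf ?D L' u - Qf ?D L u)"
      using mult_left_mono[OF hq normal_density_nonneg[of 0 1 u]] by (simp add: mult_ac)
  qed
  moreover have "(\<integral>u. indicator J u * std_normal_density u * AA \<partial>lborel) = measure NN J * AA"
    unfolding J_def by (simp add: int_NN)
  moreover have "(\<integral>u. std_normal_density u * (Qf ?D L' u - Qf ?D L u) \<partial>lborel) = G_PT s0 s1 alpha tau t L' - G_PT s0 s1 alpha tau t L"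
    unfolding G_int[OF L] G_int[OF L'] using Qf_int[OF L] Qf_int[OF L'] by (simp add: right_diff_distrib)
  moreover have "0 < measure NN J * AA" using J AA by simp
  ultimately show ?thesis by linarith
qed

lemma G_lim: "((\<lambda>n::nat. G_PT s0 s1 alpha tau t (real n)) \<longlongrightarrow> 1) sequentially"
proof -
  let ?D = "t * s0"
  have "((\<lambda>n::nat. \<integral>u. std_normal_density u * Qf ?D (real n) u \<partial>lborel) \<longlongrightarrow> (\<integral>u. std_normal_density u * 1 \<partial>lborel)) sequentially"
  proof (rule integral_dominated_convergence[where w = std_normal_density])
    show "AE u in lborel. (\<lambda>n. std_normal_density u * Qf ?D (real n) u) \<longlonglongrightarrow> std_normal_density u * 1"
    proof (rule AE_I2)
      fix u
      have "(\<lambda>n. Qf ?D (real n) u) \<longlonglongrightarrow> 1"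
        unfolding Qf_def
        using Phi_band_lim[of "- (?D * s0 / (S * s1))"] Phi_band_lim[of "u * s0 / s1"]
        by (cases "\<bar>u + ?D / S\<bar> \<le> c") simp_all
      then show "(\<lambda>n. std_normal_density u * Qf ?D (real n) u) \<longlonglongrightarrow> std_normal_density u * 1"
        by (intro tendsto_intros)
    qed
    fix n :: nat
    show "AE u in lborel. norm (std_normal_density u * Qf ?D (real n) u) \<le> std_normal_density u"
      by (rule AE_I2) (auto simp: abs_mult Qf_nonneg Qf_le1 intro!: mult_left_le)
  qed auto
  then show ?thesis using G_int by simp
qed

lemma G_cont:
  assumes L: "0 \<le> L"
  shows "continuous_on A (\<lambda>t. G_PT s0 s1 alpha tau t L)"
proof -
  define h where "h u = (Phi (L + sqrt g * u) - Phi (- L + sqrt g * u)) * phi u" for u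
  have [measurable]: "h \<in> borel_measurable borel" unfolding h_def phi_def by measurable
  have hb: "\<bar>h u\<bar> \<le> std_normal_density u" for u
  proof -
    have "0 \<le> Phi (L + sqrt g * u) - Phi (- L + sqrt g * u)" using L by (auto intro!: Phi_mono)
    moreover have "Phi (L + sqrt g * u) - Phi (- L + sqrt g * u) \<le> 1"
      using Phi_le1[of "L + sqrt g * u"] Phi_nonneg[of "- L + sqrt g * u"] by linarith
    ultimately show ?thesis unfolding h_def phi_def abs_mult
      using mult_left_le_one_le[of "std_normal_density u" "Phi (L + sqrt g * u) - Phi (- L + sqrt g * u)"]
      by simp
  qed
  have c1: "continuous_on A (\<lambda>t. (LBINT u:{..k t}. h u))" if "continuous_on A k" for k
    by (rule lip_cont_comp[OF Iic_lip that]) (auto simp: hb)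
  have c2: "continuous_on A (\<lambda>t. (LBINT u:{k t..}. h u))" if "continuous_on A k" for k
    by (rule lip_cont_comp[OF Ici_lip that]) (auto simp: hb)
  have "continuous_on A (\<lambda>t. (Phi (c - sqrt (g / (1 + g)) * t) - Phi (- c - sqrt (g / (1 + g)) * t)) * (Phi (L - g / sqrt (1 + g) * t) - Phi (- L - g / sqrt (1 + g) * t))
           + (LBINT u:{..- c - sqrt (g / (1 + g)) * t}. h u)
           + (LBINT u:{c - sqrt (g / (1 + g)) * t..}. h u))"
    by (intro continuous_intros c1 c2)
  then show ?thesis unfolding G_formula[OF L] h_def .
qed

end


lemma part3_abstract:
  fixes G :: "real \<Rightarrow> real \<Rightarrow> real" and b z :: real
  assumes b: "0 \<le> b" and z: "0 < z" "z < 1"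
    and cont: "\<And>L. 0 \<le> L \<Longrightarrow> continuous_on UNIV (\<lambda>t. G t L)"
    and lip: "\<And>t L L'. 0 \<le> L \<Longrightarrow> 0 \<le> L' \<Longrightarrow> \<bar>G t L - G t L'\<bar> \<le> 2 * \<bar>L - L'\<bar>"
    and strict: "\<And>t L L'. 0 \<le> L \<Longrightarrow> L < L' \<Longrightarrow> G t L < G t L'"
    and zero: "\<And>t. G t 0 = 0"
    and lim: "\<And>t. ((\<lambda>n::nat. G t (real n)) \<longlongrightarrow> 1) sequentially"
    and sym: "\<And>t L. G (- t) L = G t L"
  defines "m \<equiv> (\<lambda>L. INF t\<in>{t. \<bar>t\<bar> \<le> b}. G t L)"
  defines "Lh \<equiv> Inf {L. 0 \<le> L \<and> m L \<ge> 1 - z}"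
  shows "Lh \<ge> 0 \<and> (\<exists>t\<in>{0..b}. G t Lh = 1 - z) \<and> (\<forall>t\<in>{0..b}. G t Lh \<ge> 1 - z)
     \<and> (\<forall>L. L \<ge> 0 \<longrightarrow> (\<exists>t\<in>{0..b}. G t L = 1 - z) \<longrightarrow> (\<forall>t\<in>{0..b}. G t L \<ge> 1 - z) \<longrightarrow> L = Lh)
     \<and> (\<forall>t. \<bar>t\<bar> \<le> b \<longrightarrow> G t Lh \<ge> 1 - z)
     \<and> (\<forall>L. 0 \<le> L \<longrightarrow> L < Lh \<longrightarrow> (\<exists>t. \<bar>t\<bar> \<le> b \<and> G t L < 1 - z))"
proof -
  define T where "T = {0..b}"
  define T' where "T' = {t::real. \<bar>t\<bar> \<le> b}"
  have TT: "T \<subseteq> T'" unfolding T_def T'_def by auto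
  have min_ex: "\<exists>tL\<in>T. \<forall>t\<in>T'. G tL L \<le> G t L" if L: "0 \<le> L" for L
  proof -
    have "\<exists>x\<in>T. \<forall>y\<in>T. G x L \<le> G y L"
      using b unfolding T_def
      by (intro continuous_attains_inf) (auto intro: continuous_on_subset[OF cont[OF L]])
    then obtain tL where tL: "tL \<in> T" "\<forall>y\<in>T. G tL L \<le> G y L" by blast
    have "G tL L \<le> G t L" if "t \<in> T'" for t
    proof (cases "0 \<le> t")
      case True then show ?thesis using that tL unfolding T_def T'_def by auto
    next
      case False
      then have "- t \<in> T" using that unfolding T_def T'_def by auto
      then show ?thesis using tL sym[of t L] by (metis minus_minus)
    qed
    then show ?thesis using tL by blast
  qed
  then obtain tm where tm: "\<And>L. 0 \<le> L \<Longrightarrow> tm L \<in> T \<and> (\<forall>t\<in>T'. G (tm L) L \<le> G t L)"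
    by metis
  have mval: "m L = G (tm L) L" if "0 \<le> L" for L
    unfolding m_def T'_def[symmetric]
    by (rule cInf_eq_minimum) (use tm[OF that] TT in auto)
  have mle: "m L \<le> G t L" if "0 \<le> L" "t \<in> T'" for L t
    using mval[OF that(1)] tm[OF that(1)] that(2) by auto
  have mstrict: "m L < m L'" if "0 \<le> L" "L < L'" for L L'
  proof -
    have "m L \<le> G (tm L') L" using mle[OF that(1)] tm[of L'] that TT by auto
    also have "\<dots> < G (tm L') L'" by (rule strict[OF that])
    also have "\<dots> = m L'" using mval[of L'] that by simp
    finally show ?thesis .
  qed
  have mlip: "m L \<le> m L' + 2 * \<bar>L - L'\<bar>" if "0 \<le> L" "0 \<le> L'" for L L'
  proof -
    have "m L \<le> G (tm L') L" using mle[OF that(1)] tm[OF that(2)] TT by auto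
    also have "\<dots> \<le> G (tm L') L' + 2 * \<bar>L - L'\<bar>" using lip[OF that, of "tm L'"] by linarith
    also have "\<dots> = m L' + 2 * \<bar>L - L'\<bar>" using mval[OF that(2)] by simp
    finally show ?thesis .
  qed
  have m0: "m 0 = 0" using mval[of 0] zero by simp
  have "\<exists>N::nat. 1 - z < m (real N)"
  proof -
    define U where "U n = {t. 1 - z < G t (real n)}" for n :: nat
    have "open (U n)" for n unfolding U_def
      by (rule open_Collect_less) (auto intro: cont)
    moreover have "T \<subseteq> (\<Union>n. U n)"
    proof
      fix t assume "t \<in> T"
      have "eventually (\<lambda>n. 1 - z < G t (real n)) sequentially"
        using lim[of t] z by (intro order_tendstoD) auto
      then obtain n where "1 - z < G t (real n)" by (auto simp: eventually_sequentially)
      then show "t \<in> (\<Union>n. U n)" unfolding U_def by auto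
    qed
    moreover have "compact T" unfolding T_def by simp
    ultimately obtain C' where C': "finite C'" "T \<subseteq> (\<Union>n\<in>C'. U n)"
      by (metis compactE_image subset_UNIV)
    have "0 \<in> T" using b unfolding T_def by simp
    then have ne: "C' \<noteq> {}" using C' by auto
    define N where "N = Max C'"
    have "1 - z < G t (real N)" if tT: "t \<in> T" for t
    proof -
      obtain n where n: "n \<in> C'" "1 - z < G t (real n)" using C' tT unfolding U_def by auto
      have "n \<le> N" unfolding N_def using n C' by simp
      then have "G t (real n) \<le> G t (real N)"
        using strict[of "real n" "real N" t] by (cases "n = N") auto
      then show ?thesis using n by simp
    qed
    then have "1 - z < m (real N)" using mval[of "real N"] tm[of "real N"] by simp
    then show ?thesis by blast
  qed
  then obtain N :: nat where N: "1 - z < m (real N)" by blast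
  have mcont: "continuous_on {0..real N} m"
  proof (rule continuous_onI)
    fix x e :: real assume e: "0 < e"
    show "\<exists>d>0. \<forall>x'\<in>{0..real N}. dist x' x < d \<longrightarrow> dist (m x') (m x) \<le> e" if "x \<in> {0..real N}"
    proof (intro exI[of _ "e / 2"] conjI ballI impI)
      show "0 < e / 2" using e by simp
      fix x' assume x': "x' \<in> {0..real N}" "dist x' x < e / 2"
      then show "dist (m x') (m x) \<le> e"
        using mlip[of x' x] mlip[of x x'] that unfolding dist_real_def
        by (auto simp: abs_minus_commute abs_le_iff)
    qed
  qed
  obtain Ls where Ls: "0 \<le> Ls" "Ls \<le> real N" "m Ls = 1 - z"
    using IVT'[of m 0 "1 - z" "real N"] m0 z N mcont by auto
  have Lh: "Lh = Ls" unfolding Lh_def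
  proof (rule cInf_eq_minimum)
    show "Ls \<in> {L. 0 \<le> L \<and> 1 - z \<le> m L}" using Ls by simp
    fix x assume x: "x \<in> {L. 0 \<le> L \<and> 1 - z \<le> m L}"
    show "Ls \<le> x"
    proof (rule ccontr)
      assume "\<not> Ls \<le> x"
      then have "m x < m Ls" using x by (intro mstrict) auto
      then show False using x Ls by simp
    qed
  qed
  have TT': "t \<in> T'" if "t \<in> {0..b}" for t using that unfolding T'_def by auto
  show ?thesis
  proof (intro conjI allI impI ballI)
    show "0 \<le> Lh" using Lh Ls by simp
    show "\<exists>t\<in>{0..b}. G t Lh = 1 - z"
      using tm[of Ls] mval[of Ls] Ls Lh unfolding T_def by auto
    show "1 - z \<le> G t Lh" if "t \<in> {0..b}" for t
      using mle[of Ls t] TT'[OF that] Ls Lh by simp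
    show "1 - z \<le> G t Lh" if "\<bar>t\<bar> \<le> b" for t
      using mle[of Ls t] that Ls Lh unfolding T'_def by simp
  next
    fix L :: real assume L: "0 \<le> L" and ex: "\<exists>t\<in>{0..b}. G t L = 1 - z" and all: "\<forall>t\<in>{0..b}. 1 - z \<le> G t L"
    have "1 - z \<le> m L" using mval[OF L] tm[OF L] all unfolding T_def by auto
    moreover have "m L \<le> 1 - z" using ex mle[OF L] TT' by force
    ultimately have mL: "m L = m Ls" using Ls by simp
    show "L = Lh"
    proof (rule ccontr)
      assume "L \<noteq> Lh"
      then have "L < Ls \<or> Ls < L" using Lh by auto
      then show False using mstrict[of L Ls] mstrict[of Ls L] L Ls mL by auto
    qed
  next
    fix L :: real assume L: "0 \<le> L" "L < Lh"
    then have "m L < m Ls" using Lh by (intro mstrict) auto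
    then show "\<exists>t. \<bar>t\<bar> \<le> b \<and> G t L < 1 - z"
      using mval[OF L(1)] tm[OF L(1)] Ls TT unfolding T'_def by (intro exI[of _ "tm L"]) auto
  qed
qed



theorem theorem2:
  fixes s0 s1 alpha tau :: real
  assumes "s0 > 0" and "s1 > 0" and "0 < alpha" and "alpha < 1"
  shows
    "(\<forall>L Delta. L > 0 \<longrightarrow>
        cover_prob s0 s1 alpha tau Delta L = cover_prob s0 s1 alpha tau (- Delta) L)
   \<and> (\<forall>t L. L \<ge> 0 \<longrightarrow>
        (let c = crit (alpha / 2); g = gam s0 s1;
             a = sqrt (g / (1 + g)) * t; d = g / sqrt (1 + g) * t in
         G_PT s0 s1 alpha tau t L =
           (Phi (c - a) - Phi (- c - a)) * (Phi (L - d) - Phi (- L - d))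
           + (LBINT u:{..- c - a}. (Phi (L + sqrt g * u) - Phi (- L + sqrt g * u)) * phi u)
           + (LBINT u:{c - a..}. (Phi (L + sqrt g * u) - Phi (- L + sqrt g * u)) * phi u)))
   \<and> (\<forall>b zeta. b \<ge> 0 \<longrightarrow> 0 < zeta \<longrightarrow> zeta < 1 \<longrightarrow>
        (let Lh = L_hat s0 s1 alpha tau b zeta in
          Lh \<ge> 0
          \<and> (\<exists>t\<in>{0..b}. G_PT s0 s1 alpha tau t Lh = 1 - zeta)
          \<and> (\<forall>t\<in>{0..b}. G_PT s0 s1 alpha tau t Lh \<ge> 1 - zeta)
          \<and> (\<forall>L. L \<ge> 0 \<longrightarrow>
                (\<exists>t\<in>{0..b}. G_PT s0 s1 alpha tau t L = 1 - zeta) \<longrightarrow>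
                (\<forall>t\<in>{0..b}. G_PT s0 s1 alpha tau t L \<ge> 1 - zeta) \<longrightarrow> L = Lh)
          \<and> (\<forall>Delta. \<bar>Delta / s0\<bar> \<le> b \<longrightarrow> cover_prob s0 s1 alpha tau Delta Lh \<ge> 1 - zeta)
          \<and> (\<forall>L. 0 \<le> L \<longrightarrow> L < Lh \<longrightarrow>
                (\<exists>Delta. \<bar>Delta / s0\<bar> \<le> b \<and> cover_prob s0 s1 alpha tau Delta L < 1 - zeta))))"
proof -
  interpret setting s0 s1 alpha tau using assms by unfold_locales
  have cG: "cover_prob s0 s1 alpha tau Delta L = G_PT s0 s1 alpha tau (Delta / s0) L" for Delta L
    unfolding G_PT_def using s0 by simp
  have P1: "\<forall>L Delta. L > 0 \<longrightarrow>
        cover_prob s0 s1 alpha tau Delta L = cover_prob s0 s1 alpha tau (- Delta) L"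
    using cover_sym by simp
  have P2: "\<forall>t L. L \<ge> 0 \<longrightarrow>
        (let c = crit (alpha / 2); g = gam s0 s1;
             a = sqrt (g / (1 + g)) * t; d = g / sqrt (1 + g) * t in
         G_PT s0 s1 alpha tau t L =
           (Phi (c - a) - Phi (- c - a)) * (Phi (L - d) - Phi (- L - d))
           + (LBINT u:{..- c - a}. (Phi (L + sqrt g * u) - Phi (- L + sqrt g * u)) * phi u)
           + (LBINT u:{c - a..}. (Phi (L + sqrt g * u) - Phi (- L + sqrt g * u)) * phi u))"
    unfolding Let_def using G_formula by blast
  have P3: "(let Lh = L_hat s0 s1 alpha tau b zeta in
          Lh \<ge> 0
          \<and> (\<exists>t\<in>{0..b}. G_PT s0 s1 alpha tau t Lh = 1 - zeta)
          \<and> (\<forall>t\<in>{0..b}. G_PT s0 s1 alpha tau t Lh \<ge> 1 - zeta)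
          \<and> (\<forall>L. L \<ge> 0 \<longrightarrow>
                (\<exists>t\<in>{0..b}. G_PT s0 s1 alpha tau t L = 1 - zeta) \<longrightarrow>
                (\<forall>t\<in>{0..b}. G_PT s0 s1 alpha tau t L \<ge> 1 - zeta) \<longrightarrow> L = Lh)
          \<and> (\<forall>Delta. \<bar>Delta / s0\<bar> \<le> b \<longrightarrow> cover_prob s0 s1 alpha tau Delta Lh \<ge> 1 - zeta)
          \<and> (\<forall>L. 0 \<le> L \<longrightarrow> L < Lh \<longrightarrow>
                (\<exists>Delta. \<bar>Delta / s0\<bar> \<le> b \<and> cover_prob s0 s1 alpha tau Delta L < 1 - zeta)))"
    if b: "b \<ge> 0" and z: "0 < zeta" "zeta < 1" for b zeta
  proof -
    let ?G = "\<lambda>t L. G_PT s0 s1 alpha tau t L"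
    have set_eq: "{Delta. \<bar>Delta / s0\<bar> \<le> b} = (\<lambda>t. t * s0) ` {t. \<bar>t\<bar> \<le> b}"
    proof (intro set_eqI iffI)
      fix x assume "x \<in> {Delta. \<bar>Delta / s0\<bar> \<le> b}"
      then show "x \<in> (\<lambda>t. t * s0) ` {t. \<bar>t\<bar> \<le> b}"
        using s0 by (intro image_eqI[of _ _ "x / s0"]) auto
    next
      fix x assume "x \<in> (\<lambda>t. t * s0) ` {t. \<bar>t\<bar> \<le> b}"
      then show "x \<in> {Delta. \<bar>Delta / s0\<bar> \<le> b}" using s0 by (auto simp: abs_mult)
    qed
    have INFeq: "(INF Delta\<in>{Delta. \<bar>Delta / s0\<bar> \<le> b}. cover_prob s0 s1 alpha tau Delta L)
        = (INF t\<in>{t. \<bar>t\<bar> \<le> b}. ?G t L)" for L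
      unfolding set_eq image_image G_PT_def ..
    have Lh: "L_hat s0 s1 alpha tau b zeta = Inf {L. 0 \<le> L \<and> (INF t\<in>{t. \<bar>t\<bar> \<le> b}. ?G t L) \<ge> 1 - zeta}"
      unfolding L_hat_def INFeq ..
    have A: "let Lh = Inf {L. 0 \<le> L \<and> (INF t\<in>{t. \<bar>t\<bar> \<le> b}. ?G t L) \<ge> 1 - zeta} in
       Lh \<ge> 0 \<and> (\<exists>t\<in>{0..b}. ?G t Lh = 1 - zeta) \<and> (\<forall>t\<in>{0..b}. ?G t Lh \<ge> 1 - zeta)
     \<and> (\<forall>L. L \<ge> 0 \<longrightarrow> (\<exists>t\<in>{0..b}. ?G t L = 1 - zeta) \<longrightarrow> (\<forall>t\<in>{0..b}. ?G t L \<ge> 1 - zeta) \<longrightarrow> L = Lh)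
     \<and> (\<forall>t. \<bar>t\<bar> \<le> b \<longrightarrow> ?G t Lh \<ge> 1 - zeta)
     \<and> (\<forall>L. 0 \<le> L \<longrightarrow> L < Lh \<longrightarrow> (\<exists>t. \<bar>t\<bar> \<le> b \<and> ?G t L < 1 - zeta))"
      unfolding Let_def
      by (rule part3_abstract[OF b z]) (auto intro: G_cont G_lipL G_strict G_zero G_lim G_sym)
    show ?thesis
      unfolding Let_def Lh[symmetric]
    proof (intro conjI allI impI)
      let ?Lh = "L_hat s0 s1 alpha tau b zeta"
      note A' = A[unfolded Let_def Lh[symmetric]]
      show "0 \<le> ?Lh" "\<exists>t\<in>{0..b}. ?G t ?Lh = 1 - zeta" "\<forall>t\<in>{0..b}. 1 - zeta \<le> ?G t ?Lh" using A' by auto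
      show "L = ?Lh" if "0 \<le> L" "\<exists>t\<in>{0..b}. ?G t L = 1 - zeta" "\<forall>t\<in>{0..b}. 1 - zeta \<le> ?G t L" for L
        using A' that by blast
      show "1 - zeta \<le> cover_prob s0 s1 alpha tau Delta ?Lh" if "\<bar>Delta / s0\<bar> \<le> b" for Delta
        unfolding cG using A' that by blast
      show "\<exists>Delta. \<bar>Delta / s0\<bar> \<le> b \<and> cover_prob s0 s1 alpha tau Delta L < 1 - zeta"
        if hL: "0 \<le> L" "L < ?Lh" for L
      proof -
        obtain t where t: "\<bar>t\<bar> \<le> b" "?G t L < 1 - zeta" using A' hL by blast
        show ?thesis using t s0 by (intro exI[of _ "t * s0"]) (simp add: cG)
      qed
    qed
  qed
  show ?thesis using P1 P2 P3 by blast
qed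


end
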